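(* Let $G$ be a graph and let $A$ and $B$ be disjoint subsets of $V(G)$ such that every vertex of $A$ is adjacent in $G$ to every vertex of $B$. Let $P_A$ be a path in $G[A]$ and $P_B$ a path in $G[B]$, both non-empty. If \[|B\setminus V(P_B)|\le |A\setminus V(P_A)|\le |B|-1,\] then $G[A\cup B]$ has a cycle whose vertex set is $A\cup B$.
   Context: Paths may consist of a single vertex. A single vertex and a single edge are also considered to be cycles. *)

theory Defs
  imports Main
begin

definition graph :: "'a set \<Rightarrow> ('a \<Rightarrow> 'a \<Rightarrow> bool) \<Rightarrow> bool" where
  "graph V E \<longleftrightarrow> finite V \<and> (\<forall>x y. E x y \<longrightarrow> x \<in> V \<and> y \<in> V)
     \<and> (\<forall>x y. E x y \<longrightarrow> E y x) \<and> (\<forall>x. \<not> E x x)"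

definition path_in :: "('a \<Rightarrow> 'a \<Rightarrow> bool) \<Rightarrow> 'a set \<Rightarrow> 'a list \<Rightarrow> bool" where
  "path_in E S xs \<longleftrightarrow> xs \<noteq> [] \<and> distinct xs \<and> set xs \<subseteq> S
     \<and> (\<forall>i. Suc i < length xs \<longrightarrow> E (xs ! i) (xs ! Suc i))"

text \<open>A single vertex and a single edge count as cycles; for three or more vertices
  the closing edge from the last to the first vertex is required.\<close>
definition cycle_in :: "('a \<Rightarrow> 'a \<Rightarrow> bool) \<Rightarrow> 'a set \<Rightarrow> 'a list \<Rightarrow> bool" where
  "cycle_in E S xs \<longleftrightarrow> path_in E S xs \<and> (3 \<le> length xs \<longrightarrow> E (last xs) (hd xs))"

end

theory Submission
  imports Defs
begin

fun alt :: "'a list \<Rightarrow> 'a list \<Rightarrow> 'a list" where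
  "alt (x#xs) (y#ys) = x # y # alt xs ys"
| "alt _ _ = []"

lemma alt_set: "length xs = length ys \<Longrightarrow> set (alt xs ys) = set xs \<union> set ys"
  by (induction xs ys rule: alt.induct) auto

lemma alt_distinct: "length xs = length ys \<Longrightarrow> distinct xs \<Longrightarrow> distinct ys
  \<Longrightarrow> set xs \<inter> set ys = {} \<Longrightarrow> distinct (alt xs ys)"
  by (induction xs ys rule: alt.induct) (auto simp: alt_set)

lemma alt_hd: "alt xs ys \<noteq> [] \<Longrightarrow> hd (alt xs ys) \<in> set xs"
  by (induction xs ys rule: alt.induct) auto

lemma alt_last: "alt xs ys \<noteq> [] \<Longrightarrow> last (alt xs ys) \<in> set ys"
  by (induction xs ys rule: alt.induct) auto

lemma alt_succ:
  assumes "\<And>x y. x \<in> A \<Longrightarrow> y \<in> B \<Longrightarrow> E x y \<and> E y x"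
  shows "set xs \<subseteq> A \<Longrightarrow> set ys \<subseteq> B \<Longrightarrow> successively E (alt xs ys)"
proof (induction xs ys rule: alt.induct)
  case (1 x xs y ys)
  have "successively E (alt xs ys)" using 1 by auto
  moreover have "alt xs ys \<noteq> [] \<Longrightarrow> E y (hd (alt xs ys))"
    using alt_hd[of xs ys] 1(2,3) assms by auto
  ultimately show ?case using 1(2,3) assms by (auto simp: successively_Cons)
qed auto

lemma succ_drop: "successively P xs \<Longrightarrow> successively P (drop m xs)"
  by (metis append_take_drop_id successively_append_iff)

theorem lemma3p3:
  fixes V :: "'a set" and E :: "'a \<Rightarrow> 'a \<Rightarrow> bool"
    and A B :: "'a set" and PA PB :: "'a list"
  assumes "graph V E"
    and "A \<subseteq> V" and "B \<subseteq> V" and "A \<inter> B = {}"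
    and "\<forall>a\<in>A. \<forall>b\<in>B. E a b"
    and "path_in E A PA" and "path_in E B PB"
    and "card (B - set PB) \<le> card (A - set PA)"
    and "card (A - set PA) \<le> card B - 1"
  shows "\<exists>C. cycle_in E (A \<union> B) C \<and> set C = A \<union> B"
proof -
  have fin: "finite A" "finite B" using assms(1-3) unfolding graph_def
    by (auto intro: finite_subset)
  have sym: "\<And>x y. E x y \<Longrightarrow> E y x" using assms(1) unfolding graph_def by blast
  have AB: "\<And>x y. x \<in> A \<Longrightarrow> y \<in> B \<Longrightarrow> E x y \<and> E y x" using assms(5) sym by blast
  have pa: "PA \<noteq> []" "distinct PA" "set PA \<subseteq> A" "successively E PA"
    using assms(6) unfolding path_in_def successively_conv_nth by auto
  have pb: "PB \<noteq> []" "distinct PB" "set PB \<subseteq> B" "successively E PB"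
    using assms(7) unfolding path_in_def successively_conv_nth by auto
  obtain as where as: "set as = A - set PA" "distinct as"
    using finite_distinct_list[of "A - set PA"] fin by auto
  obtain bs where bs: "set bs = B - set PB" "distinct bs"
    using finite_distinct_list[of "B - set PB"] fin by auto
  have la: "length as = card (A - set PA)" using as distinct_card by metis
  have lb: "length bs = card (B - set PB)" using bs distinct_card by metis
  have cB: "card B = length PB + length bs"
  proof -
    have "B = set PB \<union> set bs" using bs pb by auto
    moreover have "set PB \<inter> set bs = {}" using bs by auto
    ultimately show ?thesis using card_Un_disjoint[of "set PB" "set bs"]
      by (simp add: distinct_card pb(2) bs(2))
  qed
  define m where "m = length as - length bs"
  have m: "m < length PB" "length as = m + length bs"
  proof -
    have "length PB > 0" using pb(1) by simp
    then show "m < length PB" "length as = m + length bs"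
      using assms(8,9) la lb cB unfolding m_def by linarith+
  qed
  define D where "D = drop m PB"
  define cs where "cs = take m PB @ bs"
  define C where "C = PA @ D @ alt as cs"
  have D: "D \<noteq> []" "successively E D" "set D \<subseteq> B"
    using m pb succ_drop unfolding D_def by (auto dest: in_set_dropD)
  have lcs: "length cs = length as" using m unfolding cs_def by simp
  have cs: "set cs \<subseteq> B" "distinct cs" "set cs \<inter> set D = {}"
  proof -
    have "distinct (take m PB @ drop m PB)" using pb(2) by simp
    hence d: "distinct (take m PB)" "set (take m PB) \<inter> set (drop m PB) = {}"
      by (simp_all only: distinct_append)
    show "set cs \<subseteq> B" using pb bs unfolding cs_def by (auto dest: in_set_takeD)
    show "distinct cs" using d bs unfolding cs_def by (auto dest: in_set_takeD)
    show "set cs \<inter> set D = {}" using d bs unfolding cs_def D_def by (auto dest: in_set_dropD)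
  qed
  have setPB: "set PB = set (take m PB) \<union> set D"
    unfolding D_def by (metis append_take_drop_id set_append)
  have setC: "set C = A \<union> B"
    unfolding C_def using alt_set[OF lcs[symmetric]] as bs setPB pa pb
    unfolding cs_def by auto
  have succ_alt: "successively E (alt as cs)"
    using alt_succ[of A B E as cs] AB as cs by blast
  have s2: "successively E (D @ alt as cs)"
  proof -
    have "alt as cs \<noteq> [] \<Longrightarrow> E (last D) (hd (alt as cs))"
      using D alt_hd[of as cs] as AB by (metis Diff_subset last_in_set subsetD)
    thus ?thesis using D succ_alt by (auto simp add: successively_append_iff)
  qed
  have "E (last PA) (hd (D @ alt as cs))"
    using D pa AB by (simp add: subset_iff)
  hence succC: "successively E C"
    unfolding C_def using s2 pa by (simp add: successively_append_iff)
  have dD: "distinct D" using pb(2) unfolding D_def by simp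
  have dalt: "distinct (alt as cs)"
    using alt_distinct[OF lcs[symmetric] as(2) cs(2)] as cs(1) assms(4) by blast
  have distC: "distinct C"
    unfolding C_def using dD dalt pa as cs D alt_distinct[OF lcs[symmetric] as(2) cs(2)]
      alt_set[OF lcs[symmetric]] assms(4) by auto
  have close: "E (last C) (hd C)"
  proof -
    have "last C \<in> B"
      unfolding C_def using D alt_last[of as cs] cs(1) by (auto simp: last_append)
    moreover have "hd C \<in> A" unfolding C_def using pa by (simp add: subset_iff)
    ultimately show ?thesis using AB by blast
  qed
  have "cycle_in E (A \<union> B) C"
  proof -
    have "C \<noteq> []" unfolding C_def using pa by simp
    thus ?thesis unfolding cycle_in_def path_in_def
      using succC distC close setC unfolding successively_conv_nth by auto
  qed
  thus ?thesis using setC by blast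
qed

end
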